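(* Let $N\ge 1$ be an integer. Let $\phi_0,\phi_1,\phi_2,\dots$ be the orthonormal Hermite polynomials with respect to the weight $M(v)=\frac{1}{\sqrt{2\pi}}e^{-v^2/2}$, i.e. $\int_{\mathbb{R}}\phi_i(v)\phi_j(v)M(v)\,dv=\delta_{ij}$, with $\phi_0=1$, $\phi_1(v)=v$ and $v\phi_k(v)=\sqrt{k}\,\phi_{k-1}(v)+\sqrt{k+1}\,\phi_{k+1}(v)$. Let $0<z_1<\dots<z_N$ be the positive roots of $\phi_{2N}$, and set $v_j=-z_j$, $v_{N+j}=z_j$ for $j=1,\dots,N$. Let $V$ be the $2N\times 2N$ matrix with entries $V_{ij}=\phi_{i}(v_{j+1})$ for $i,j=0,\dots,2N-1$. Let $A$ be the symmetric tridiagonal $2N\times 2N$ matrix with zero diagonal and off-diagonal entries $A_{p-1,p}=A_{p,p-1}=\sqrt{p}$ for $p=1,\dots,2N-1$ (indices from $0$). Define the $N\times 2N$ matrix $B_1=\begin{pmatrix} I_N & -I_N\end{pmatrix}V^T$. Then, for every number of edges $n$, $y^TAy=0$ for every $y\in\ker(B_1)$.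
   Context: $I_N$ denotes the $N\times N$ identity matrix. The matrix $B_1$ encodes the boundary condition $B_1U(0,t)=0$ satisfied by the sum of the moment vectors over all $n$ edges at a network junction with the symmetric coupling condition; it does not depend on $n$. *)

theory Defs
  imports Complex_Main "Jordan_Normal_Form.Matrix_Kernel"
begin

fun hphi :: "nat \<Rightarrow> real \<Rightarrow> real" where
  "hphi 0 v = 1"
| "hphi (Suc 0) v = v"
| "hphi (Suc (Suc k)) v =
     (v * hphi (Suc k) v - sqrt (real (Suc k)) * hphi k v) / sqrt (real (Suc (Suc k)))"

definition nodes :: "nat \<Rightarrow> (nat \<Rightarrow> real) \<Rightarrow> nat \<Rightarrow> real" where
  "nodes N z j = (if j \<le> N then - z j else z (j - N))"

definition Vmat :: "nat \<Rightarrow> (nat \<Rightarrow> real) \<Rightarrow> real mat" where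
  "Vmat N z = mat (2*N) (2*N) (\<lambda>(i,j). hphi i (nodes N z (j+1)))"

definition Amat :: "nat \<Rightarrow> real mat" where
  "Amat N = mat (2*N) (2*N) (\<lambda>(i,j).
     if j = i + 1 then sqrt (real j) else if i = j + 1 then sqrt (real i) else 0)"

definition IminusI :: "nat \<Rightarrow> real mat" where
  "IminusI N = mat N (2*N) (\<lambda>(i,j). if j = i then 1 else if j = i + N then -1 else 0)"

definition B1mat :: "nat \<Rightarrow> (nat \<Rightarrow> real) \<Rightarrow> real mat" where
  "B1mat N z = IminusI N * transpose_mat (Vmat N z)"

end

theory Submission imports Defs "HOL-Computational_Algebra.Polynomial" begin

fun hp :: "nat \<Rightarrow> real poly" where
  "hp 0 = 1"
| "hp (Suc 0) = [:0,1:]"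
| "hp (Suc (Suc k)) = Polynomial.smult (1 / sqrt (real (Suc (Suc k)))) ([:0,1:] * hp (Suc k) - Polynomial.smult (sqrt (real (Suc k))) (hp k))"

lemma poly_hp: "poly (hp k) v = hphi k v"
  by (induction k rule: hp.induct) (auto simp: algebra_simps diff_divide_distrib)

lemma hp_deg: "Polynomial.degree (hp k) = k \<and> Polynomial.coeff (hp k) k > 0"
proof (induction k rule: hp.induct)
  case 1 then show ?case by simp
next
  case 2 then show ?case by simp
next
  case (3 k)
  let ?a = "[:0,1:] * hp (Suc k)"
  have nz: "hp (Suc k) \<noteq> 0" using 3 by (metis coeff_0 less_irrefl)
  have da: "Polynomial.degree ?a = Suc (Suc k)" using 3 nz by (simp add: degree_mult_eq)
  have ca: "Polynomial.coeff ?a (Suc (Suc k)) = Polynomial.coeff (hp (Suc k)) (Suc k)"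
    by simp
  have db: "Polynomial.degree (Polynomial.smult (sqrt (real (Suc k))) (hp k)) < Suc (Suc k)"
    using 3 by (metis degree_smult_le le_less_trans lessI less_SucI)
  have d: "Polynomial.degree (?a - Polynomial.smult (sqrt (real (Suc k))) (hp k)) = Suc (Suc k)"
    using da db by (metis degree_add_eq_left degree_minus diff_conv_add_uminus)
  have c: "Polynomial.coeff (?a - Polynomial.smult (sqrt (real (Suc k))) (hp k)) (Suc (Suc k)) > 0"
  proof -
    have "Polynomial.coeff (hp k) (Suc (Suc k)) = 0" using 3 by (simp add: coeff_eq_0)
    then show ?thesis using ca 3 by simp
  qed
  show ?case using d c by (simp only: hp.simps degree_smult_eq coeff_smult) simp
qed

lemma hphi_neg: "hphi k (-v) = (-1)^k * hphi k v"
  proof (induction k rule: hp.induct)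
  case (3 k)
  have "hphi (Suc (Suc k)) (-v) = ((-v) * hphi (Suc k) (-v) - sqrt (real (Suc k)) * hphi k (-v)) / sqrt (real (Suc (Suc k)))"
    by simp
  also have "\<dots> = (-1)^k * ((v * hphi (Suc k) v - sqrt (real (Suc k)) * hphi k v) / sqrt (real (Suc (Suc k))))"
  proof -
    have "(-v) * ((-1)^(Suc k) * hphi (Suc k) v) - sqrt (real (Suc k)) * ((-1)^k * hphi k v)
        = (-1)^k * (v * hphi (Suc k) v - sqrt (real (Suc k)) * hphi k v)"
      by (simp add: algebra_simps)
    then show ?thesis unfolding 3 by (simp only: times_divide_eq_right)
  qed
  finally show ?case by simp
qed simp_all

lemma indep: "(\<Sum>i<n. Polynomial.smult (c i) (hp i)) = 0 \<Longrightarrow> i < n \<Longrightarrow> c i = 0"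
proof (induction n arbitrary: i)
  case 0 then show ?case by simp
next
  case (Suc n)
  have low: "Polynomial.coeff (\<Sum>i<n. Polynomial.smult (c i) (hp i)) n = 0"
  proof -
    have "\<forall>i<n. Polynomial.coeff (hp i) n = 0" using hp_deg by (simp add: coeff_eq_0)
    then show ?thesis by (simp add: coeff_sum)
  qed
  have e: "(\<Sum>i<Suc n. Polynomial.smult (c i) (hp i)) = (\<Sum>i<n. Polynomial.smult (c i) (hp i)) + Polynomial.smult (c n) (hp n)"
    by (rule sum.lessThan_Suc)
  have "Polynomial.coeff (\<Sum>i<Suc n. Polynomial.smult (c i) (hp i)) n = c n * Polynomial.coeff (hp n) n"
    unfolding e coeff_add low coeff_smult by simp
  then have "c n * Polynomial.coeff (hp n) n = 0" by (simp only: Suc.prems(1) coeff_0)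
  then have cn: "c n = 0" using hp_deg[of n] by simp
  have "(\<Sum>i<n. Polynomial.smult (c i) (hp i)) = 0" using Suc.prems(1) unfolding e cn by simp
  then have IH: "\<And>i. i < n \<Longrightarrow> c i = 0" using Suc.IH by blast
  show ?case
  proof (cases "i = n")
    case True then show ?thesis using cn by simp
  next
    case False then show ?thesis using IH Suc.prems(2) by simp
  qed
qed

theorem lemma4p2:
  fixes N :: nat and z :: "nat \<Rightarrow> real" and y :: "real vec"
  assumes "N \<ge> 1"
    and "strict_mono_on {1..N} z"
    and "\<forall>j\<in>{1..N}. 0 < z j \<and> hphi (2*N) (z j) = 0"
    and "\<forall>x>0. hphi (2*N) x = 0 \<longrightarrow> x \<in> z ` {1..N}"
    and "y \<in> mat_kernel (B1mat N z)"
  shows "y \<bullet> (Amat N *\<^sub>v y) = 0"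
proof -
  have V: "Vmat N z \<in> carrier_mat (2*N) (2*N)" by (simp add: Vmat_def)
  have I: "IminusI N \<in> carrier_mat N (2*N)" by (simp add: IminusI_def)
  have dy: "y \<in> carrier_vec (2*N)" and kB: "B1mat N z *\<^sub>v y = 0\<^sub>v N"
    using assms(5) V I by (auto simp: mat_kernel_def B1mat_def)
  define w where "w = transpose_mat (Vmat N z) *\<^sub>v y"
  define P where "P v = (\<Sum>i<2*N. y$i * hphi i v)" for v
  have wj: "w $ j = P (nodes N z (j+1))" if "j < 2*N" for j
    using that dy unfolding w_def P_def
    by (simp add: Vmat_def scalar_prod_def mult.commute lessThan_atLeast0)
  have Iw: "IminusI N *\<^sub>v w = 0\<^sub>v N"
    using kB V I dy unfolding B1mat_def w_def by simp
  have sym: "P (- z j) = P (z j)" if j: "j \<in> {1..N}" for j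
  proof -
    define k where "k = j - 1"
    have k: "k < N" "j = k + 1" using j by (auto simp: k_def)
    have dw: "dim_vec w = 2*N" by (simp add: w_def Vmat_def)
    have "(IminusI N *\<^sub>v w) $ k = 0" using Iw k by simp
    moreover have "(IminusI N *\<^sub>v w) $ k = (\<Sum>i<2*N. (if i = k then 1 else if i = k + N then -1 else 0) * w $ i)"
      using k dw by (simp add: IminusI_def scalar_prod_def lessThan_atLeast0)
    moreover have "(\<Sum>i<2*N. (if i = k then 1 else if i = k + N then -1 else 0) * w $ i)
        = (\<Sum>i<2*N. (if i = k then w $ i else 0)) - (\<Sum>i<2*N. (if i = k + N then w $ i else 0))"
      unfolding sum_subtractf[symmetric] using assms(1) by (intro sum.cong) auto
    moreover have "\<dots> = w $ k - w $ (k + N)" using k by simp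
    ultimately have "w $ k = w $ (k + N)" by linarith
    moreover have "w $ k = P (- z j)" using k wj[of k] by (simp add: nodes_def)
    moreover have "w $ (k + N) = P (z j)" using k wj[of "k+N"] by (simp add: nodes_def)
    ultimately show ?thesis by simp
  qed
  define c where "c i = (if odd i then y$i else 0)" for i
  define Q where "Q = (\<Sum>i<2*N. Polynomial.smult (c i) (hp i))"
  have polyQ: "poly Q v = (P v - P (-v)) / 2" for v
  proof -
    have "poly Q v = (\<Sum>i<2*N. c i * hphi i v)"
      by (simp add: Q_def poly_sum poly_hp)
    also have "\<dots> = (\<Sum>i<2*N. (y$i * hphi i v - y$i * hphi i (-v)) / 2)"
      by (intro sum.cong) (auto simp: c_def hphi_neg)
    also have "\<dots> = (P v - P (-v)) / 2"
      unfolding P_def by (simp only: sum_subtractf[symmetric] sum_divide_distrib)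
    finally show ?thesis .
  qed
  define R where "R = z ` {1..N} \<union> uminus ` z ` {1..N}"
  have inj: "inj_on z {1..N}" using assms(2) by (rule strict_mono_on_imp_inj_on)
  have c1: "card (z ` {1..N}) = N" using inj by (simp add: card_image)
  have c2: "card (uminus ` z ` {1..N}) = N" using c1 by (simp add: card_image)
  have disj: "z ` {1..N} \<inter> uminus ` z ` {1..N} = {}"
  proof -
    have ne: "z a \<noteq> - z b" if "a \<in> {1..N}" "b \<in> {1..N}" for a b
    proof -
      have "0 < z a" "0 < z b" using assms(3) that by auto
      then show ?thesis by linarith
    qed
    show ?thesis using ne by auto
  qed
  have cR: "card R = 2*N" unfolding R_def using c1 c2 disj by (simp add: card_Un_disjoint)
  have degQ: "Polynomial.degree Q < 2*N"
  proof -
    have "Polynomial.degree Q \<le> 2*N - 1" unfolding Q_def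
      by (rule degree_sum_le) (use hp_deg in \<open>auto intro: order.trans[OF degree_smult_le]\<close>)
    then show ?thesis using assms(1) by simp
  qed
  have rootsQ: "poly Q x = poly 0 x" if "x \<in> R" for x
    using that sym unfolding R_def by (auto simp: polyQ)
  have Q0: "Q = 0"
    by (rule poly_eqI_degree[OF rootsQ]) (use cR degQ assms(1) in auto)
  have yodd: "y$i = 0" if "odd i" "i < 2*N" for i
    using indep[of c "2*N" i] Q0 that unfolding Q_def c_def by auto
  have term0: "y$i * (Amat N *\<^sub>v y) $ i = 0" if i: "i < 2*N" for i
  proof (cases "odd i")
    case True then show ?thesis using yodd i by simp
  next
    case False
    have "(Amat N *\<^sub>v y) $ i = (\<Sum>j<2*N. Amat N $$ (i, j) * y $ j)"
      using i dy by (simp add: Amat_def scalar_prod_def lessThan_atLeast0)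
    also have "\<dots> = 0"
    proof (intro sum.neutral ballI)
      fix j assume j: "j \<in> {..<2*N}"
      show "Amat N $$ (i, j) * y $ j = 0"
      proof (cases "j = i + 1 \<or> i = j + 1")
        case True
        then have "odd j" using False by auto
        then show ?thesis using yodd j by simp
      next
        case F: False
        then show ?thesis using i j by (simp add: Amat_def)
      qed
    qed
    finally show ?thesis by simp
  qed
  have "y \<bullet> (Amat N *\<^sub>v y) = (\<Sum>i<2*N. y$i * (Amat N *\<^sub>v y) $ i)"
    using dy by (simp add: scalar_prod_def Amat_def lessThan_atLeast0)
  also have "\<dots> = 0" using term0 by (intro sum.neutral) simp
  finally show ?thesis .
qed

end
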